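(* (a) $[0,1]^\mathbb{N}/c_0\equiv_B\mathbb{T}^\mathbb{N}/G_0$. (b) For every $1\le p<\infty$, $[0,1]^\mathbb{N}/\ell^p\equiv_B\mathbb{T}^\mathbb{N}/G_p$.
   Context: $\mathbb{T}=\{z\in\mathbb{C}:|z|=1\}$; $c_0$ is the space of real sequences converging to $0$; $\ell^p$ the real sequences with $\sum|\alpha_n|^p<\infty$. $G_0=\{(e^{i\alpha_n})_n:(\alpha_n)\in c_0\}$ and $G_p=\{(e^{i\alpha_n})_n:(\alpha_n)\in\ell^p\}$. $[0,1]^\mathbb{N}/c_0$ is the equivalence relation on $[0,1]^\mathbb{N}$ (product topology) given by $\alpha\sim\beta\iff\alpha-\beta\in c_0$; similarly $[0,1]^\mathbb{N}/\ell^p$ with $\ell^p$. $\mathbb{T}^\mathbb{N}/G$ is the equivalence relation on $\mathbb{T}^\mathbb{N}$ given by $z\sim w\iff zw^{-1}\in G$ (coordinatewise operations). For equivalence relations $E,F$ on Polish spaces $X,Y$, $E\le_B F$ means there is a Borel map $f:X\to Y$ with $xEy\iff f(x)Ff(y)$ for all $x,y$; $E\equiv_B F$ means $E\le_B F$ and $F\le_B E$. *)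

theory Defs
  imports "HOL-Analysis.Analysis"
begin

definition borel_reducible ::
  "'a::topological_space set \<Rightarrow> ('a \<Rightarrow> 'a \<Rightarrow> bool) \<Rightarrow>
   'b::topological_space set \<Rightarrow> ('b \<Rightarrow> 'b \<Rightarrow> bool) \<Rightarrow> bool" where
  "borel_reducible X E Y F \<longleftrightarrow>
     (\<exists>f. f \<in> measurable (restrict_space borel X) (restrict_space borel Y) \<and>
          (\<forall>x\<in>X. \<forall>y\<in>X. E x y \<longleftrightarrow> F (f x) (f y)))"

definition borel_bireducible ::
  "'a::topological_space set \<Rightarrow> ('a \<Rightarrow> 'a \<Rightarrow> bool) \<Rightarrow>
   'b::topological_space set \<Rightarrow> ('b \<Rightarrow> 'b \<Rightarrow> bool) \<Rightarrow> bool" where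
  "borel_bireducible X E Y F \<longleftrightarrow> borel_reducible X E Y F \<and> borel_reducible Y F X E"

definition cube :: "(nat \<Rightarrow> real) set" where
  "cube = {\<alpha>. \<forall>n. \<alpha> n \<in> {0..1}}"

definition torusN :: "(nat \<Rightarrow> complex) set" where
  "torusN = {z. \<forall>n. norm (z n) = 1}"

definition c0 :: "(nat \<Rightarrow> real) set" where
  "c0 = {\<alpha>. \<alpha> \<longlonglongrightarrow> 0}"

definition lp :: "real \<Rightarrow> (nat \<Rightarrow> real) set" where
  "lp p = {\<alpha>. summable (\<lambda>n. \<bar>\<alpha> n\<bar> powr p)}"

definition exp_group :: "(nat \<Rightarrow> real) set \<Rightarrow> (nat \<Rightarrow> complex) set" where
  "exp_group S = {z. \<exists>\<alpha>\<in>S. z = (\<lambda>n. exp (\<i> * complex_of_real (\<alpha> n)))}"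

definition G0 :: "(nat \<Rightarrow> complex) set" where
  "G0 = exp_group c0"

definition Gp :: "real \<Rightarrow> (nat \<Rightarrow> complex) set" where
  "Gp p = exp_group (lp p)"

definition real_coset_rel :: "(nat \<Rightarrow> real) set \<Rightarrow> (nat \<Rightarrow> real) \<Rightarrow> (nat \<Rightarrow> real) \<Rightarrow> bool" where
  "real_coset_rel S \<alpha> \<beta> \<longleftrightarrow> (\<lambda>n. \<alpha> n - \<beta> n) \<in> S"

definition torus_coset_rel :: "(nat \<Rightarrow> complex) set \<Rightarrow> (nat \<Rightarrow> complex) \<Rightarrow> (nat \<Rightarrow> complex) \<Rightarrow> bool" where
  "torus_coset_rel G z w \<longleftrightarrow> (\<lambda>n. z n * inverse (w n)) \<in> G"

end

theory Submission
  imports Defs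
begin


definition good :: "(nat \<Rightarrow> real) set \<Rightarrow> bool" where
  "good S \<longleftrightarrow>
    (\<forall>a b C. 0 \<le> C \<longrightarrow> (\<forall>\<^sub>F n in sequentially. \<bar>a n\<bar> \<le> C * \<bar>b n\<bar>) \<longrightarrow> b \<in> S \<longrightarrow> a \<in> S) \<and>
    (\<forall>a b. a \<in> S \<longrightarrow> b \<in> S \<longrightarrow> (\<lambda>n. a n + b n) \<in> S) \<and>
    (\<forall>a. a \<in> S \<longrightarrow> a \<longlonglongrightarrow> 0) \<and>
    (\<forall>c. c \<in> S \<longleftrightarrow> (\<lambda>n. c (2*n)) \<in> S \<and> (\<lambda>n. c (2*n+1)) \<in> S)"

lemma lim_even_odd:
  fixes c :: "nat \<Rightarrow> real"
  assumes e: "(\<lambda>n. c (2*n)) \<longlonglongrightarrow> 0" and o: "(\<lambda>n. c (2*n+1)) \<longlonglongrightarrow> 0"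
  shows "c \<longlonglongrightarrow> 0"
proof (rule LIMSEQ_I)
  fix r :: real assume r: "0 < r"
  obtain N1 where N1: "\<And>n. n \<ge> N1 \<Longrightarrow> norm (c (2*n) - 0) < r" using LIMSEQ_D[OF e r] by blast
  obtain N2 where N2: "\<And>n. n \<ge> N2 \<Longrightarrow> norm (c (2*n+1) - 0) < r" using LIMSEQ_D[OF o r] by blast
  show "\<exists>no. \<forall>n\<ge>no. norm (c n - 0) < r"
  proof (intro exI allI impI)
    fix k assume k: "k \<ge> 2 * (N1 + N2)"
    show "norm (c k - 0) < r"
    proof (cases "even k")
      case True
      then have "k = 2 * (k div 2)" by simp
      moreover have "k div 2 \<ge> N1" using k by auto
      ultimately show ?thesis using N1[of "k div 2"] by metis
    next
      case False
      then have "k = 2 * (k div 2) + 1" by simp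
      moreover have "k div 2 \<ge> N2" using k by auto
      ultimately show ?thesis using N2[of "k div 2"] by metis
    qed
  qed
qed

lemma good_c0: "good c0"
  unfolding good_def c0_def
proof (intro conjI allI impI)
  fix a b :: "nat \<Rightarrow> real" and C :: real
  assume C: "0 \<le> C" and ev: "\<forall>\<^sub>F n in sequentially. \<bar>a n\<bar> \<le> C * \<bar>b n\<bar>"
    and b: "b \<in> {\<alpha>. \<alpha> \<longlonglongrightarrow> 0}"
  have "(\<lambda>n. C * \<bar>b n\<bar>) \<longlonglongrightarrow> 0"
    using b tendsto_mult_right_zero tendsto_rabs_zero by force
  then show "a \<in> {\<alpha>. \<alpha> \<longlonglongrightarrow> 0}"
    using Lim_null_comparison[of a "\<lambda>n. C * \<bar>b n\<bar>"] ev by auto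
next
  fix a b :: "nat \<Rightarrow> real"
  assume "a \<in> {\<alpha>. \<alpha> \<longlonglongrightarrow> 0}" "b \<in> {\<alpha>. \<alpha> \<longlonglongrightarrow> 0}"
  then show "(\<lambda>n. a n + b n) \<in> {\<alpha>. \<alpha> \<longlonglongrightarrow> 0}" using tendsto_add[of a 0 _ b 0] by auto
next
  fix a :: "nat \<Rightarrow> real" assume "a \<in> {\<alpha>. \<alpha> \<longlonglongrightarrow> 0}" then show "a \<longlonglongrightarrow> 0" by simp
next
  fix c :: "nat \<Rightarrow> real"
  have "strict_mono (\<lambda>n::nat. 2*n)" "strict_mono (\<lambda>n::nat. 2*n+1)" by (auto simp: strict_mono_def)
  then show "c \<in> {\<alpha>. \<alpha> \<longlonglongrightarrow> 0} \<longleftrightarrow> (\<lambda>n. c (2 * n)) \<in> {\<alpha>. \<alpha> \<longlonglongrightarrow> 0} \<and> (\<lambda>n. c (2 * n + 1)) \<in> {\<alpha>. \<alpha> \<longlonglongrightarrow> 0}"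
    using LIMSEQ_subseq_LIMSEQ[of c 0 "\<lambda>n::nat. 2*n"] LIMSEQ_subseq_LIMSEQ[of c 0 "\<lambda>n::nat. 2*n+1"] lim_even_odd[of c]
    by (auto simp add: comp_def)
qed

lemma summable_even_odd:
  fixes g :: "nat \<Rightarrow> real"
  assumes nn: "\<And>n. 0 \<le> g n"
  shows "summable g \<longleftrightarrow> summable (\<lambda>n. g (2*n)) \<and> summable (\<lambda>n. g (2*n+1))"
proof -
  define e where "e k = (if even k then g k else 0)" for k
  define od where "od k = (if odd k then g k else 0)" for k
  have sm1: "strict_mono (\<lambda>n::nat. 2*n)" "strict_mono (\<lambda>n::nat. 2*n+1)" by (auto simp: strict_mono_def)
  have "summable (\<lambda>n. e (2*n)) \<longleftrightarrow> summable e"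
    by (rule summable_mono_reindex[OF sm1(1)]) (auto simp: e_def elim!: evenE)
  moreover have "summable (\<lambda>n. od (2*n+1)) \<longleftrightarrow> summable od"
    by (rule summable_mono_reindex[OF sm1(2)]) (auto simp: od_def elim!: oddE)
  moreover have "(\<lambda>n. e (2*n)) = (\<lambda>n. g (2*n))" "(\<lambda>n. od (2*n+1)) = (\<lambda>n. g (2*n+1))"
    by (auto simp: e_def od_def)
  moreover have "g = (\<lambda>n. e n + od n)" by (auto simp: e_def od_def)
  moreover have "summable g \<Longrightarrow> summable e"
    by (rule summable_comparison_test[where g=g]) (auto simp: e_def nn)
  moreover have "summable g \<Longrightarrow> summable od"
    by (rule summable_comparison_test[where g=g]) (auto simp: od_def nn)
  ultimately show ?thesis by (metis summable_add)
qed

lemma powr_add_bound: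
  fixes x y p :: real
  assumes "0 \<le> p"
  shows "\<bar>x + y\<bar> powr p \<le> 2 powr p * (\<bar>x\<bar> powr p + \<bar>y\<bar> powr p)"
proof -
  have "\<bar>x + y\<bar> \<le> 2 * max \<bar>x\<bar> \<bar>y\<bar>" by auto
  then have "\<bar>x + y\<bar> powr p \<le> (2 * max \<bar>x\<bar> \<bar>y\<bar>) powr p"
    by (intro powr_mono2) (use assms in auto)
  also have "\<dots> = 2 powr p * max \<bar>x\<bar> \<bar>y\<bar> powr p" by (simp add: powr_mult)
  also have "max \<bar>x\<bar> \<bar>y\<bar> powr p \<le> \<bar>x\<bar> powr p + \<bar>y\<bar> powr p"
    by (cases "\<bar>x\<bar> \<le> \<bar>y\<bar>") (auto simp: max_def)
  finally show ?thesis by (simp add: mult_left_mono)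
qed

lemma good_lp:
  assumes p: "1 \<le> p"
  shows "good (lp p)"
  unfolding good_def lp_def
proof (intro conjI allI impI)
  fix a b :: "nat \<Rightarrow> real" and C :: real
  assume C: "0 \<le> C" and ev: "\<forall>\<^sub>F n in sequentially. \<bar>a n\<bar> \<le> C * \<bar>b n\<bar>"
    and b: "b \<in> {\<alpha>. summable (\<lambda>n. \<bar>\<alpha> n\<bar> powr p)}"
  have "\<forall>\<^sub>F n in sequentially. norm (\<bar>a n\<bar> powr p) \<le> C powr p * \<bar>b n\<bar> powr p"
    using ev
  proof eventually_elim
    case (elim n)
    have "\<bar>a n\<bar> powr p \<le> (C * \<bar>b n\<bar>) powr p" by (intro powr_mono2) (use elim p in auto)
    then show ?case using C by (simp add: powr_mult)
  qed
  moreover have "summable (\<lambda>n. C powr p * \<bar>b n\<bar> powr p)" using b by (auto intro: summable_mult)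
  ultimately have "summable (\<lambda>n. \<bar>a n\<bar> powr p)"
    by (rule summable_comparison_test_ev)
  then show "a \<in> {\<alpha>. summable (\<lambda>n. \<bar>\<alpha> n\<bar> powr p)}" by simp
next
  fix a b :: "nat \<Rightarrow> real"
  assume a: "a \<in> {\<alpha>. summable (\<lambda>n. \<bar>\<alpha> n\<bar> powr p)}" and b: "b \<in> {\<alpha>. summable (\<lambda>n. \<bar>\<alpha> n\<bar> powr p)}"
  have "summable (\<lambda>n. 2 powr p * (\<bar>a n\<bar> powr p + \<bar>b n\<bar> powr p))"
    using a b by (auto intro: summable_mult summable_add)
  moreover have "\<And>n. norm (\<bar>a n + b n\<bar> powr p) \<le> 2 powr p * (\<bar>a n\<bar> powr p + \<bar>b n\<bar> powr p)"
    using powr_add_bound p by simp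
  ultimately show "(\<lambda>n. a n + b n) \<in> {\<alpha>. summable (\<lambda>n. \<bar>\<alpha> n\<bar> powr p)}"
    using summable_comparison_test[of "\<lambda>n. \<bar>a n + b n\<bar> powr p" "\<lambda>n. 2 powr p * (\<bar>a n\<bar> powr p + \<bar>b n\<bar> powr p)"] by auto
next
  fix a :: "nat \<Rightarrow> real" assume a: "a \<in> {\<alpha>. summable (\<lambda>n. \<bar>\<alpha> n\<bar> powr p)}"
  then have "(\<lambda>n. \<bar>a n\<bar> powr p) \<longlonglongrightarrow> 0" by (simp add: summable_LIMSEQ_zero)
  then have "(\<lambda>n. (\<bar>a n\<bar> powr p) powr (1/p)) \<longlonglongrightarrow> 0"
    by (rule tendsto_zero_powrI) (use p in auto)
  moreover have "(\<lambda>n. (\<bar>a n\<bar> powr p) powr (1/p)) = (\<lambda>n. \<bar>a n\<bar>)"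
    using p by (simp add: powr_powr)
  ultimately show "a \<longlonglongrightarrow> 0" by (simp add: tendsto_rabs_zero_iff)
next
  fix c :: "nat \<Rightarrow> real"
  show "c \<in> {\<alpha>. summable (\<lambda>n. \<bar>\<alpha> n\<bar> powr p)} \<longleftrightarrow> (\<lambda>n. c (2 * n)) \<in> {\<alpha>. summable (\<lambda>n. \<bar>\<alpha> n\<bar> powr p)} \<and> (\<lambda>n. c (2 * n + 1)) \<in> {\<alpha>. summable (\<lambda>n. \<bar>\<alpha> n\<bar> powr p)}"
    using summable_even_odd[of "\<lambda>n. \<bar>c n\<bar> powr p"] by auto
qed



lemma sin_ge_half: "0 \<le> x \<Longrightarrow> x \<le> pi/3 \<Longrightarrow> x/2 \<le> sin x"
proof -
  assume x: "0 \<le> x" "x \<le> pi/3"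
  have "(\<lambda>t. sin t - t/2) 0 \<le> (\<lambda>t. sin t - t/2) x"
  proof (rule DERIV_nonneg_imp_nondecreasing[OF x(1)])
    fix y assume y: "0 \<le> y" "y \<le> x"
    have "cos (pi/3) \<le> cos y" using y x by (subst cos_mono_le_eq) auto
    then have "0 \<le> cos y - 1/2" by (simp add: cos_60)
    moreover have "DERIV (\<lambda>t. sin t - t/2) y :> cos y - 1/2"
      by (auto intro!: derivative_eq_intros)
    ultimately show "\<exists>d. DERIV (\<lambda>t. sin t - t/2) y :> d \<and> 0 \<le> d" by blast
  qed
  then show ?thesis by simp
qed

lemma norm_exp_minus_1: "cmod (exp (\<i> * complex_of_real t) - 1) \<le> \<bar>t\<bar>"
proof -
  have e: "exp (\<i> * complex_of_real t) = Complex (cos t) (sin t)"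
    by (simp add: exp_Euler complex_eq_iff cos_of_real sin_of_real)
  have "(cmod (exp (\<i> * complex_of_real t) - 1))^2 = (cos t - 1)^2 + (sin t)^2"
    by (simp add: e cmod_power2)
  also have "\<dots> = 2 - 2 * cos t" by (simp add: power2_eq_square algebra_simps sin_squared_eq)
  also have "\<dots> = 4 * (sin (t/2))^2" using cos_double_sin[of "t/2"] by simp
  also have "\<dots> \<le> 4 * (t/2)^2"
  proof -
    have "(sin (t/2))^2 \<le> (t/2)^2" using abs_sin_x_le_abs_x[of "t/2"] abs_le_square_iff by blast
    then show ?thesis by simp
  qed
  also have "\<dots> = \<bar>t\<bar>^2" by (simp add: power2_eq_square)
  finally show ?thesis by (rule power2_le_imp_le) simp
qed

lemma Arg_bound:
  assumes u: "cmod u = 1"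
  shows "\<bar>Arg u\<bar> \<le> pi * cmod (u - 1)"
proof (cases "cmod (u - 1) \<ge> 1")
  case True
  have "\<bar>Arg u\<bar> \<le> pi" using mpi_less_Arg[of u] Arg_le_pi[of u] by auto
  also have "\<dots> \<le> pi * cmod (u - 1)" using True by simp
  finally show ?thesis .
next
  case False
  define t where "t = Arg u"
  have ue: "u = exp (\<i> * complex_of_real t)" proof -
    have "u \<noteq> 0" using u by auto
    then show ?thesis using Arg_eq[of u] u by (simp add: t_def)
  qed
  have e: "u = Complex (cos t) (sin t)"
    by (simp add: ue exp_Euler complex_eq_iff cos_of_real sin_of_real)
  have "(cmod (u - 1))^2 = (cos t - 1)^2 + (sin t)^2"
    by (simp add: e cmod_power2)
  also have "\<dots> = 2 - 2 * cos t" by (simp add: power2_eq_square algebra_simps sin_squared_eq)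
  finally have sq: "(cmod (u - 1))^2 = 2 - 2 * cos t" .
  have "(cmod (u - 1))^2 < 1" using False by (simp add: power_less_one_iff)
  then have c: "cos (pi/3) < cos \<bar>t\<bar>" using sq by (simp add: cos_60)
  have tb: "\<bar>t\<bar> \<le> pi" using mpi_less_Arg[of u] Arg_le_pi[of u] by (auto simp: t_def)
  have "\<bar>t\<bar> < pi/3" using c tb by (subst (asm) cos_mono_less_eq) auto
  then have "\<bar>t\<bar>/2 \<le> sin \<bar>t\<bar>" by (intro sin_ge_half) auto
  also have "sin \<bar>t\<bar> = \<bar>sin t\<bar>"
  proof (cases "t \<ge> 0")
    case True then show ?thesis using sin_ge_zero[of t] \<open>\<bar>t\<bar> < pi/3\<close> by auto
  next
    case False then show ?thesis using sin_ge_zero[of "-t"] \<open>\<bar>t\<bar> < pi/3\<close> by auto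
  qed
  also have "\<bar>sin t\<bar> = \<bar>Im (u - 1)\<bar>" by (simp add: e)
  also have "\<dots> \<le> cmod (u - 1)" by (rule abs_Im_le_cmod)
  finally have "\<bar>t\<bar> \<le> 2 * cmod (u - 1)" by simp
  also have "\<dots> \<le> pi * cmod (u - 1)" using pi_gt3 by (intro mult_right_mono) auto
  finally show ?thesis by (simp add: t_def)
qed



lemma goodD1: "good S \<Longrightarrow> 0 \<le> C \<Longrightarrow> (\<And>n. \<bar>a n\<bar> \<le> C * \<bar>b n\<bar>) \<Longrightarrow> b \<in> S \<Longrightarrow> a \<in> S"
  unfolding good_def by (meson always_eventually)
lemma goodD1ev: "good S \<Longrightarrow> 0 \<le> C \<Longrightarrow> (\<forall>\<^sub>F n in sequentially. \<bar>a n\<bar> \<le> C * \<bar>b n\<bar>) \<Longrightarrow> b \<in> S \<Longrightarrow> a \<in> S"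
  unfolding good_def by blast
lemma goodD3: "good S \<Longrightarrow> a \<in> S \<Longrightarrow> b \<in> S \<Longrightarrow> (\<lambda>n. a n + b n) \<in> S"
  unfolding good_def by blast
lemma goodD4: "good S \<Longrightarrow> a \<in> S \<Longrightarrow> a \<longlonglongrightarrow> 0"
  unfolding good_def by blast
lemma goodD5: "good S \<Longrightarrow> c \<in> S \<longleftrightarrow> (\<lambda>n. c (2*n)) \<in> S \<and> (\<lambda>n. c (2*n+1)) \<in> S"
  unfolding good_def by blast

lemma good_half: "good S \<Longrightarrow> (\<lambda>n. a n / 2) \<in> S \<longleftrightarrow> a \<in> S"
proof
  assume g: "good S" and "(\<lambda>n. a n / 2) \<in> S"
  then show "a \<in> S" using goodD1[of S 2 a "\<lambda>n. a n / 2"] by auto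
next
  assume g: "good S" and "a \<in> S"
  then show "(\<lambda>n. a n / 2) \<in> S" using goodD1[of S "1/2" "\<lambda>n. a n / 2" a] by auto
qed

definition Emap :: "(nat \<Rightarrow> real) \<Rightarrow> nat \<Rightarrow> complex" where
  "Emap \<alpha> = (\<lambda>n. exp (\<i> * complex_of_real (pi * \<alpha> n)))"

lemma red1:
  assumes g: "good S" and a: "\<alpha> \<in> cube" and b: "\<beta> \<in> cube"
  shows "real_coset_rel S \<alpha> \<beta> \<longleftrightarrow> torus_coset_rel (exp_group S) (Emap \<alpha>) (Emap \<beta>)"
proof -
  define d where "d n = \<alpha> n - \<beta> n" for n
  have dle: "\<bar>d n\<bar> \<le> 1" for n
  proof -
    have "0 \<le> \<alpha> n" "\<alpha> n \<le> 1" "0 \<le> \<beta> n" "\<beta> n \<le> 1" using a b by (auto simp: cube_def)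
    then show ?thesis by (simp add: d_def abs_le_iff)
  qed
  have q: "Emap \<alpha> n * inverse (Emap \<beta> n) = exp (\<i> * complex_of_real (pi * d n))" for n
    by (simp add: Emap_def d_def exp_minus[symmetric] exp_add[symmetric] algebra_simps)
  have "torus_coset_rel (exp_group S) (Emap \<alpha>) (Emap \<beta>) \<longleftrightarrow>
        (\<exists>\<gamma>\<in>S. (\<lambda>n. exp (\<i> * complex_of_real (pi * d n))) = (\<lambda>n. exp (\<i> * complex_of_real (\<gamma> n))))"
    by (simp add: torus_coset_rel_def exp_group_def q)
  also have "\<dots> \<longleftrightarrow> d \<in> S"
  proof
    assume "\<exists>\<gamma>\<in>S. (\<lambda>n. exp (\<i> * complex_of_real (pi * d n))) = (\<lambda>n. exp (\<i> * complex_of_real (\<gamma> n)))"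
    then obtain \<gamma> where gS: "\<gamma> \<in> S" and eq: "\<And>n. exp (\<i> * complex_of_real (pi * d n)) = exp (\<i> * complex_of_real (\<gamma> n))"
      by (metis)
    have "\<gamma> \<longlonglongrightarrow> 0" using goodD4[OF g gS] .
    then obtain N where N: "\<And>n. n \<ge> N \<Longrightarrow> norm (\<gamma> n - 0) < pi" using LIMSEQ_D[of \<gamma> 0 pi] pi_gt_zero by blast
    have ev: "\<forall>\<^sub>F n in sequentially. \<bar>d n\<bar> \<le> (1/pi) * \<bar>\<gamma> n\<bar>"
    proof (rule eventually_sequentiallyI[of N])
      fix n assume n: "N \<le> n"
      have gn: "\<bar>\<gamma> n\<bar> < pi" using N[OF n] by simp
      obtain k :: int where k: "\<i> * complex_of_real (pi * d n) = \<i> * complex_of_real (\<gamma> n) + (of_int (2 * k) * pi) * \<i>"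
        using eq[of n] exp_eq by blast
      have "pi * d n = \<gamma> n + 2 * of_int k * pi" using arg_cong[OF k, of Im] by simp
      then have "\<bar>2 * of_int k * pi\<bar> \<le> \<bar>pi * d n\<bar> + \<bar>\<gamma> n\<bar>" by linarith
      also have "\<bar>pi * d n\<bar> \<le> pi" using dle[of n] by (simp add: abs_mult)
      finally have A0: "\<bar>2 * of_int k * pi\<bar> \<le> pi + \<bar>\<gamma> n\<bar>" by simp
      have "\<bar>2 * of_int k * pi\<bar> = \<bar>of_int k\<bar> * (2 * pi)" by (simp add: abs_mult)
      then have A: "\<bar>of_int k\<bar> * (2 * pi) < 2 * pi" using A0 gn by linarith
      have "\<bar>of_int k :: real\<bar> < 1"
      proof (rule ccontr)
        assume "\<not> \<bar>of_int k :: real\<bar> < 1"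
        then have "1 * (2*pi) \<le> \<bar>of_int k\<bar> * (2 * pi)" by (intro mult_right_mono) auto
        then show False using A by simp
      qed
      then have "k = 0" by linarith
      then have "d n = \<gamma> n / pi" using \<open>pi * d n = _\<close> by (simp add: field_simps)
      then show "\<bar>d n\<bar> \<le> (1/pi) * \<bar>\<gamma> n\<bar>" by simp
    qed
    show "d \<in> S" by (rule goodD1ev[OF g _ ev gS]) simp
  next
    assume dS: "d \<in> S"
    have "(\<lambda>n. pi * d n) \<in> S" using goodD1[OF g _ _ dS, where C=pi] by (simp add: abs_mult)
    then show "\<exists>\<gamma>\<in>S. (\<lambda>n. exp (\<i> * complex_of_real (pi * d n))) = (\<lambda>n. exp (\<i> * complex_of_real (\<gamma> n)))"
      by (rule bexI[rotated]) (rule refl)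
  qed
  moreover have "d = (\<lambda>n. \<alpha> n - \<beta> n)" by (simp add: d_def fun_eq_iff)
  ultimately show ?thesis by (simp add: real_coset_rel_def)
qed

definition Fmap :: "(nat \<Rightarrow> complex) \<Rightarrow> nat \<Rightarrow> real" where
  "Fmap z = (\<lambda>k. if even k then (1 + Re (z (k div 2))) / 2 else (1 + Im (z (k div 2))) / 2)"

lemma red2:
  assumes g: "good S" and z: "z \<in> torusN" and w: "w \<in> torusN"
  shows "torus_coset_rel (exp_group S) z w \<longleftrightarrow> real_coset_rel S (Fmap z) (Fmap w)"
proof -
  define u where "u n = z n * inverse (w n)" for n
  have nz: "cmod (z n) = 1" and nw: "cmod (w n) = 1" for n using z w by (auto simp: torusN_def)
  have nu: "cmod (u n) = 1" for n by (simp add: u_def norm_mult norm_inverse nz nw)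
  have u1: "cmod (u n - 1) = cmod (z n - w n)" for n
  proof -
    have "w n \<noteq> 0" using nw[of n] by auto
    then have "u n - 1 = (z n - w n) * inverse (w n)" by (simp add: u_def field_simps)
    then show ?thesis by (simp add: norm_mult norm_inverse nw)
  qed
  have s2: "u \<in> exp_group S \<longleftrightarrow> (\<lambda>n. cmod (z n - w n)) \<in> S"
  proof
    assume "u \<in> exp_group S"
    then obtain \<gamma> where gS: "\<gamma> \<in> S" and ue: "u = (\<lambda>n. exp (\<i> * complex_of_real (\<gamma> n)))"
      by (auto simp: exp_group_def)
    show "(\<lambda>n. cmod (z n - w n)) \<in> S"
      by (rule goodD1[OF g _ _ gS, where C=1]) (auto simp: u1[symmetric] ue norm_exp_minus_1)
  next
    assume S: "(\<lambda>n. cmod (z n - w n)) \<in> S"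
    have "(\<lambda>n. Arg (u n)) \<in> S"
      by (rule goodD1[OF g _ _ S, where C=pi]) (auto simp: u1[symmetric] Arg_bound nu)
    moreover have "u = (\<lambda>n. exp (\<i> * complex_of_real (Arg (u n))))"
    proof
      fix n have "u n \<noteq> 0" using nu[of n] by auto
      then show "u n = exp (\<i> * complex_of_real (Arg (u n)))" using Arg_eq[of "u n"] nu by simp
    qed
    ultimately show "u \<in> exp_group S" by (auto simp: exp_group_def)
  qed
  have s3: "(\<lambda>n. cmod (z n - w n)) \<in> S \<longleftrightarrow> (\<lambda>n. Re (z n - w n)) \<in> S \<and> (\<lambda>n. Im (z n - w n)) \<in> S"
  proof
    assume S: "(\<lambda>n. cmod (z n - w n)) \<in> S"
    have "\<bar>Re (z n - w n)\<bar> \<le> 1 * \<bar>cmod (z n - w n)\<bar>" for n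
      using abs_Re_le_cmod[of "z n - w n"] by simp
    moreover have "\<bar>Im (z n - w n)\<bar> \<le> 1 * \<bar>cmod (z n - w n)\<bar>" for n
      using abs_Im_le_cmod[of "z n - w n"] by simp
    ultimately show "(\<lambda>n. Re (z n - w n)) \<in> S \<and> (\<lambda>n. Im (z n - w n)) \<in> S"
      using goodD1[OF g _ _ S, of 1 "\<lambda>n. Re (z n - w n)"]
            goodD1[OF g _ _ S, of 1 "\<lambda>n. Im (z n - w n)"]
      by auto
  next
    assume S: "(\<lambda>n. Re (z n - w n)) \<in> S \<and> (\<lambda>n. Im (z n - w n)) \<in> S"
    have "(\<lambda>n. \<bar>Re (z n - w n)\<bar>) \<in> S" by (rule goodD1[where C=1, OF g]) (use S in auto)
    moreover have "(\<lambda>n. \<bar>Im (z n - w n)\<bar>) \<in> S" by (rule goodD1[where C=1, OF g]) (use S in auto)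
    ultimately have "(\<lambda>n. \<bar>Re (z n - w n)\<bar> + \<bar>Im (z n - w n)\<bar>) \<in> S" by (rule goodD3[OF g])
    moreover have "\<bar>cmod (z n - w n)\<bar> \<le> 1 * \<bar>\<bar>Re (z n - w n)\<bar> + \<bar>Im (z n - w n)\<bar>\<bar>" for n
      using cmod_le[of "z n - w n"] by simp
    ultimately show "(\<lambda>n. cmod (z n - w n)) \<in> S"
      using goodD1[OF g, of 1 "\<lambda>n. cmod (z n - w n)" "\<lambda>n. \<bar>Re (z n - w n)\<bar> + \<bar>Im (z n - w n)\<bar>"] by auto
  qed
  have e: "(\<lambda>n. (\<lambda>k. Fmap z k - Fmap w k) (2*n)) = (\<lambda>n. Re (z n - w n) / 2)"
    by (auto simp: Fmap_def field_simps)
  have o: "(\<lambda>n. (\<lambda>k. Fmap z k - Fmap w k) (2*n+1)) = (\<lambda>n. Im (z n - w n) / 2)"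
    by (auto simp: Fmap_def field_simps)
  have "real_coset_rel S (Fmap z) (Fmap w) \<longleftrightarrow> (\<lambda>k. Fmap z k - Fmap w k) \<in> S"
    by (simp add: real_coset_rel_def)
  also have "\<dots> \<longleftrightarrow> (\<lambda>n. Re (z n - w n) / 2) \<in> S \<and> (\<lambda>n. Im (z n - w n) / 2) \<in> S"
    using goodD5[OF g, of "\<lambda>k. Fmap z k - Fmap w k"] e o by simp
  also have "\<dots> \<longleftrightarrow> (\<lambda>n. Re (z n - w n)) \<in> S \<and> (\<lambda>n. Im (z n - w n)) \<in> S"
    using good_half[OF g, of "\<lambda>n. Re (z n - w n)"] good_half[OF g, of "\<lambda>n. Im (z n - w n)"] by simp
  moreover have "u = (\<lambda>n. z n * inverse (w n))" by (simp add: u_def fun_eq_iff)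
  ultimately show ?thesis using s2 s3 by (simp add: torus_coset_rel_def)
qed



lemma half_bound: "-1 \<le> (r::real) \<Longrightarrow> r \<le> 1 \<Longrightarrow> 0 \<le> (1 + r)/2 \<and> (1 + r)/2 \<le> 1"
  by (simp add: field_simps)

lemma Emap_meas: "Emap \<in> measurable (restrict_space borel cube) (restrict_space borel torusN)"
proof (rule measurable_restrict_space2)
  show "Emap \<in> space (restrict_space borel cube) \<rightarrow> torusN"
    by (auto simp: space_restrict_space Emap_def torusN_def)
  have "continuous_on UNIV Emap"
    unfolding Emap_def
    by (intro continuous_on_coordinatewise_then_product continuous_intros
          continuous_on_product_then_coordinatewise[OF continuous_on_id])
  then have "continuous_on cube Emap" by (rule continuous_on_subset) simp
  then show "Emap \<in> borel_measurable (restrict_space borel cube)"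
    by (rule borel_measurable_continuous_on_restrict)
qed

lemma Fmap_meas: "Fmap \<in> measurable (restrict_space borel torusN) (restrict_space borel cube)"
proof (rule measurable_restrict_space2)
  show "Fmap \<in> space (restrict_space borel torusN) \<rightarrow> cube"
  proof
    fix z assume "z \<in> space (restrict_space borel torusN)"
    then have n: "cmod (z n) = 1" for n by (auto simp: space_restrict_space torusN_def)
    have "\<bar>Re (z n)\<bar> \<le> 1" "\<bar>Im (z n)\<bar> \<le> 1" for n using abs_Re_le_cmod abs_Im_le_cmod n by metis+
    then have "- 1 \<le> Re (z n)" "Re (z n) \<le> 1" "- 1 \<le> Im (z n)" "Im (z n) \<le> 1" for n
      by (auto simp: abs_le_iff)
    then have "0 \<le> (1 + Re (z n))/2" "(1 + Re (z n))/2 \<le> 1" "0 \<le> (1 + Im (z n))/2" "(1 + Im (z n))/2 \<le> 1" for n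
      using half_bound by meson+
    then show "Fmap z \<in> cube" unfolding Fmap_def cube_def by auto
  qed
  have "continuous_on UNIV Fmap"
    unfolding Fmap_def
  proof (intro continuous_on_coordinatewise_then_product)
    fix k :: nat
    show "continuous_on UNIV (\<lambda>z. if even k then (1 + Re (z (k div 2))) / 2 else (1 + Im (z (k div 2))) / 2)"
      by (cases "even k") (auto intro!: continuous_intros
          continuous_on_product_then_coordinatewise[OF continuous_on_id])
  qed
  then have "continuous_on torusN Fmap" by (rule continuous_on_subset) simp
  then show "Fmap \<in> borel_measurable (restrict_space borel torusN)"
    by (rule borel_measurable_continuous_on_restrict)
qed

lemma bired: "good S \<Longrightarrow> borel_bireducible cube (real_coset_rel S) torusN (torus_coset_rel (exp_group S))"
  unfolding borel_bireducible_def borel_reducible_def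
  using Emap_meas Fmap_meas red1 red2 by blast

theorem mainTheorem3:
  shows "borel_bireducible cube (real_coset_rel c0) torusN (torus_coset_rel G0) \<and>
         (\<forall>p::real. 1 \<le> p \<longrightarrow>
           borel_bireducible cube (real_coset_rel (lp p)) torusN (torus_coset_rel (Gp p)))"
  unfolding G0_def Gp_def using bired good_c0 good_lp by blast

end
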